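(* Every fractal matrix (with parameters $q\ge2$, $m\ge1$) is non-expandable: no bang of it has more columns than it has.
   Context: A subcube of ${\bf Z}_q^n$ is obtained by fixing some coordinates and letting the others run through ${\bf Z}_q$; its star pattern is the vector over ${\bf Z}_q\cup\{*\}$ with fixed values in fixed coordinates and $*$ in free ones. The star matrix of a partition of ${\bf Z}_q^n$ into subcubes is the matrix whose rows are the star patterns of the subcubes; it is A-primitive if no column consists only of $*$. Fractal matrices: $M_{q,0}$ has one row and zero columns; for $m\ge1$, $M_{q,m}$ consists of $q$ horizontal blocks indexed by $a=0,\dots,q-1$, each with $q^{m-1}$ rows; its first column has entry $a$ in every row of block $a$; its remaining columns are divided into $q$ vertical stripes of width equal to the number of columns of $M_{q,m-1}$, and in block $a$ the $a$-th stripe is a copy of $M_{q,m-1}$ while other stripes of block $a$ are all $*$. A fractal matrix is any matrix obtained from some $M_{q,m}$ by permuting rows and columns; it is an A-primitive star matrix of a partition into $q^m$ subcubes of equal dimension. Bang: given an A-primitive star matrix $M$ of a partition into subcubes of equal dimension, a column $i$ and $a\in{\bf Z}_q$, the bang of $M$ at $(i,a)$ is obtained by: (1) deleting column $i$; (2) deleting all rows having in column $i$ a value of ${\bf Z}_q$ different from $a$; (3) replacing each row having $a$ in column $i$ by $q$ identical copies; (4) for each such group of $q$ copies, adjoining a new column having the values $0,1,\dots,q-1$ (each once) in the rows of that group and $*$ in all other rows; (5) deleting all columns consisting only of $*$. $M$ is non-expandable if no bang of $M$ has more columns than $M$. *)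

theory Defs
  imports "HOL-Library.Multiset" "HOL-Combinatorics.Permutations"
begin

text \<open>A star matrix is a list of rows; each row is a list of entries of type
  nat option, where None stands for the star and Some x for the value x in Z_q
  (represented by 0..q-1).\<close>

type_synonym smatrix = "nat option list list"

definition ncols :: "smatrix \<Rightarrow> nat" where
  "ncols M = (case M of [] \<Rightarrow> 0 | r # _ \<Rightarrow> length r)"

fun fractal :: "nat \<Rightarrow> nat \<Rightarrow> smatrix" where
  "fractal q 0 = [[]]"
| "fractal q (Suc m) =
     (let P = fractal q m; w = ncols P in
      concat (map (\<lambda>a. map (\<lambda>r. Some a #
          concat (map (\<lambda>b. if b = a then r else replicate w None) [0..<q])) P) [0..<q]))"

definition is_fractal :: "nat \<Rightarrow> nat \<Rightarrow> smatrix \<Rightarrow> bool" where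
  "is_fractal q m F \<longleftrightarrow>
     (let n = ncols (fractal q m) in
      \<exists>\<sigma>. \<sigma> permutes {..<n} \<and>
          mset F = mset (map (\<lambda>r. map (\<lambda>j. r ! \<sigma> j) [0..<n]) (fractal q m)))"

definition del_col :: "nat \<Rightarrow> 'a list \<Rightarrow> 'a list" where
  "del_col i r = take i r @ drop (Suc i) r"

definition bang_raw :: "nat \<Rightarrow> smatrix \<Rightarrow> nat \<Rightarrow> nat \<Rightarrow> smatrix" where
  "bang_raw q M i a =
     (let S = [del_col i r. r \<leftarrow> M, r ! i = None];
          G = [del_col i r. r \<leftarrow> M, r ! i = Some a];
          k = length G
      in map (\<lambda>r. r @ replicate k None) S @
         concat (map (\<lambda>j. map (\<lambda>b. (G ! j) @ (replicate k None)[j := Some b]) [0..<q]) [0..<k]))"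

definition bang_raw_width :: "smatrix \<Rightarrow> nat \<Rightarrow> nat \<Rightarrow> nat" where
  "bang_raw_width M i a = ncols M - 1 + length [r \<leftarrow> M. r ! i = Some a]"

definition bang :: "nat \<Rightarrow> smatrix \<Rightarrow> nat \<Rightarrow> nat \<Rightarrow> smatrix" where
  "bang q M i a =
     (let R = bang_raw q M i a;
          keep = filter (\<lambda>c. \<exists>r\<in>set R. r ! c \<noteq> None) [0..<bang_raw_width M i a]
      in map (\<lambda>r. map (\<lambda>c. r ! c) keep) R)"

definition non_expandable :: "nat \<Rightarrow> smatrix \<Rightarrow> bool" where
  "non_expandable q M \<longleftrightarrow> (\<forall>i < ncols M. \<forall>a < q. ncols (bang q M i a) \<le> ncols M)"

end

theory Submission
  imports Defs
begin

lemma nth_concat_blocks: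
  "(\<forall>x\<in>set xs. length (f x) = w) \<Longrightarrow> b < length xs \<Longrightarrow> t < w \<Longrightarrow>
   concat (map f xs) ! (b*w+t) = f (xs!b) ! t"
proof (induction xs arbitrary: b)
  case Nil then show ?case by simp
next
  case (Cons x xs)
  show ?case
  proof (cases b)
    case 0 then show ?thesis using Cons by (simp add: nth_append)
  next
    case (Suc b')
    have "concat (map f (x#xs)) ! (b*w+t) = concat (map f xs) ! (b'*w+t)"
      using Cons Suc by (simp add: nth_append)
    also have "\<dots> = f (xs!b') ! t" using Cons Suc by simp
    finally show ?thesis using Suc by simp
  qed
qed

lemma frac_props:
  assumes "q \<ge> 1"
  shows "fractal q m \<noteq> [] \<and> (\<forall>r\<in>set (fractal q m). length r = ncols (fractal q m))
     \<and> length (fractal q m) = q^m \<and> (q-1) * ncols (fractal q m) + 1 = q^m"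
proof (induction m)
  case 0 then show ?case by (simp add: ncols_def)
next
  case (Suc m)
  define P where "P = fractal q m"
  define w where "w = ncols P"
  define g where "g = (\<lambda>a0 r. Some a0 # concat (map (\<lambda>b. if b = a0 then r else replicate w (None::nat option)) [0..<q]))"
  have M: "fractal q (Suc m) = concat (map (\<lambda>a0. map (g a0) P) [0..<q])"
    unfolding g_def w_def P_def by (simp add: Let_def)
  have IH: "P \<noteq> []" "\<forall>r\<in>set P. length r = w" "length P = q^m" "(q-1)*w + 1 = q^m"
    using Suc unfolding P_def w_def by auto
  have len: "\<forall>r\<in>set (fractal q (Suc m)). length r = 1 + q*w"
  proof
    fix r assume "r \<in> set (fractal q (Suc m))"
    then obtain a0 r0 where "r = g a0 r0" "r0 \<in> set P" unfolding M by auto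
    moreover have "length (g a0 r0) = 1 + q*w" if "r0 \<in> set P" for r0 a0
    proof -
      have "length r0 = w" using IH(2) that by simp
      then have "map (length \<circ> (\<lambda>b. if b = a0 then r0 else replicate w (None::nat option))) [0..<q] = map (\<lambda>_. w) [0..<q]"
        by (simp add: comp_def)
      then have "sum_list (map (length \<circ> (\<lambda>b. if b = a0 then r0 else replicate w (None::nat option))) [0..<q]) = q * w"
        by (simp only: sum_list_triv length_upt) simp
      then show ?thesis unfolding g_def by (simp add: length_concat)
    qed
    ultimately show "length r = 1 + q*w" by simp
  qed
  have ne: "fractal q (Suc m) \<noteq> []" using IH(1) assms unfolding M
    by (cases q) auto
  have nc: "ncols (fractal q (Suc m)) = 1 + q*w"
    using ne len unfolding ncols_def by (cases "fractal q (Suc m)") auto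
  have lM: "length (fractal q (Suc m)) = q^Suc m"
  proof -
    have "map (length \<circ> (\<lambda>a0. map (g a0) P)) [0..<q] = map (\<lambda>_. length P) [0..<q]"
      by (simp add: comp_def)
    then have "sum_list (map (length \<circ> (\<lambda>a0. map (g a0) P)) [0..<q]) = q * length P"
      by (simp only: sum_list_triv length_upt) simp
    then show ?thesis unfolding M using IH(3) by (simp add: length_concat)
  qed
  have "(q-1) * (1 + q*w) + 1 = q^Suc m"
  proof -
    obtain q' where q: "q = Suc q'" using assms by (cases q) auto
    have "q' * w + 1 = q^m" using IH(4) q by simp
    then show ?thesis using q by (simp add: algebra_simps)
  qed
  then show ?case using ne len nc lM by simp
qed

lemma len_filter_concat_upt:
  "length (filter Q (concat (map (\<lambda>a0. map (g a0) P) [0..<q]))) =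
   (\<Sum>a0\<in>{0..<q}. length (filter (\<lambda>r. Q (g a0 r)) P))"
  by (simp add: length_concat filter_concat filter_map comp_def interv_sum_list_conv_sum_set_nat)

lemma divmod_inj:
  fixes b t b' t' w :: nat
  assumes "t < w" "t' < w" "b*w+t = b'*w+t'"
  shows "b = b' \<and> t = t'"
proof -
  have w: "w > 0" using assms by simp
  have 1: "(b*w+t) div w = b" "(b*w+t) mod w = t" using assms(1) w by simp_all
  have 2: "(b'*w+t') div w = b'" "(b'*w+t') mod w = t'" using assms(2) w by simp_all
  show ?thesis using 1 2 assms(3) by metis
qed

lemma key:
  assumes "q \<ge> 1"
  shows "i < ncols (fractal q m) \<Longrightarrow>
    length (filter (\<lambda>r. r!i = Some a) (fractal q m)) \<le> 1 + card {j. j < ncols (fractal q m) \<and> j \<noteq> i \<and>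
      (\<forall>r\<in>set (fractal q m). r!j \<noteq> None \<longrightarrow> r!i \<noteq> None \<and> r!i \<noteq> Some a)}"
proof (induction m arbitrary: i a)
  case 0 then show ?case by (simp add: ncols_def)
next
  case (Suc m)
  define P where "P = fractal q m"
  define w where "w = ncols P"
  define g where "g = (\<lambda>a0 r. Some a0 # concat (map (\<lambda>b. if b = a0 then r else replicate w (None::nat option)) [0..<q]))"
  have M: "fractal q (Suc m) = concat (map (\<lambda>a0. map (g a0) P) [0..<q])"
    unfolding g_def w_def P_def by (simp add: Let_def)
  have FP: "P \<noteq> []" "\<forall>r\<in>set P. length r = w" "length P = q^m" "(q-1)*w + 1 = q^m"
    using frac_props[OF assms, of m] unfolding P_def w_def by auto
  have FM: "\<forall>r\<in>set (fractal q (Suc m)). length r = ncols (fractal q (Suc m))"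
    using frac_props[OF assms, of "Suc m"] by auto
  have nc: "ncols (fractal q (Suc m)) = 1 + q*w"
  proof -
    obtain r where r: "r \<in> set P" using FP(1) by (cases P) auto
    have "g 0 r \<in> set (fractal q (Suc m))" unfolding M using assms r by auto
    moreover have "length (g 0 r) = 1 + q*w"
    proof -
      have "length r = w" using FP(2) r by simp
      then have "map (length \<circ> (\<lambda>b. if b = 0 then r else replicate w (None::nat option))) [0..<q] = map (\<lambda>_. w) [0..<q]"
        by (simp add: comp_def)
      then have "sum_list (map (length \<circ> (\<lambda>b. if b = 0 then r else replicate w (None::nat option))) [0..<q]) = q * w"
        by (simp only: sum_list_triv length_upt) simp
      then show ?thesis unfolding g_def by (simp add: length_concat)
    qed
    ultimately show ?thesis using FM by metis
  qed
  have rows: "r' \<in> set (fractal q (Suc m)) \<longleftrightarrow> (\<exists>a0<q. \<exists>r\<in>set P. r' = g a0 r)" for r'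
    unfolding M by auto
  have g0: "g a0 r ! 0 = Some a0" for a0 r unfolding g_def by simp
  have gi: "g a0 r ! (1 + (b*w+t)) = (if b = a0 then r!t else None)"
    if "r \<in> set P" "b < q" "t < w" for a0 r b t
  proof -
    have "g a0 r ! (1 + (b*w+t)) = concat (map (\<lambda>b. if b = a0 then r else replicate w (None::nat option)) [0..<q]) ! (b*w+t)"
      unfolding g_def by simp
    also have "\<dots> = (if b = a0 then r else replicate w None) ! t"
      using nth_concat_blocks[of "[0..<q]" "\<lambda>b. if b = a0 then r else replicate w (None::nat option)" w b t]
        that FP(2) by simp
    finally show ?thesis using that by simp
  qed
  define D where "D = {j. j < ncols (fractal q (Suc m)) \<and> j \<noteq> i \<and>
      (\<forall>r\<in>set (fractal q (Suc m)). r!j \<noteq> None \<longrightarrow> r!i \<noteq> None \<and> r!i \<noteq> Some a)}"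
  have finD: "finite D" unfolding D_def by simp
  have cnt: "length (filter (\<lambda>r. r!i = Some a) (fractal q (Suc m))) =
     (\<Sum>a0\<in>{0..<q}. length (filter (\<lambda>r. g a0 r ! i = Some a) P))"
    unfolding M by (rule len_filter_concat_upt)
  show ?case
  proof (cases "i = 0")
    case True
    have c1: "length (filter (\<lambda>r. g a0 r ! i = Some a) P) = (if a0 = a then length P else 0)" for a0
      using True g0 by (simp add: filter_empty_conv)
    have "length (filter (\<lambda>r. r!i = Some a) (fractal q (Suc m))) \<le> length P"
      unfolding cnt c1 by simp
    also have "\<dots> = (q-1)*w + 1" using FP by simp
    also have "(q-1)*w \<le> card D"
    proof -
      define A where "A = ({0..<q} - {a}) \<times> {..<w}"
      have "(q-1)*w \<le> card A" unfolding A_def by (simp add: card_cartesian_product card_Diff_singleton_if)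
      also have "card A = card ((\<lambda>(b,t). 1 + (b*w+t)) ` A)"
        by (rule card_image[symmetric]) (auto simp: A_def inj_on_def dest: divmod_inj)
      also have "\<dots> \<le> card D"
      proof (rule card_mono[OF finD], rule subsetI)
        fix j assume "j \<in> (\<lambda>(b,t). 1 + (b*w+t)) ` A"
        then obtain p where p: "p \<in> A" "j = (\<lambda>(b,t). 1 + (b*w+t)) p" by blast
        obtain b t where "p = (b,t)" by (cases p)
        then have bt: "b < q" "b \<noteq> a" "t < w" "j = 1 + (b*w+t)" using p unfolding A_def by auto
        have jl: "j < 1 + q*w"
        proof -
          have "b*w + t < b*w + w" using bt by simp
          also have "\<dots> = (b+1)*w" by simp
          also have "\<dots> \<le> q*w" using bt by (intro mult_right_mono) auto
          finally show ?thesis using bt by simp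
        qed
        show "j \<in> D" unfolding D_def nc
        proof (intro CollectI conjI ballI impI)
          show "j < 1 + q*w" by fact
          show "j \<noteq> i" using True bt by simp
        next
          fix r' assume r': "r' \<in> set (fractal q (Suc m))" "r' ! j \<noteq> None"
          then obtain a0 r where a0: "a0 < q" "r \<in> set P" "r' = g a0 r" using rows by auto
          then have "b = a0" using r' gi bt by (auto split: if_splits)
          then show "r' ! i \<noteq> None" "r' ! i \<noteq> Some a" using a0 g0 True bt by auto
        qed
      qed
      finally show ?thesis .
    qed
    finally show ?thesis unfolding D_def by simp
  next
    case False
    have i1: "i - 1 < q*w" using Suc.prems nc False by simp
    then have wpos: "w > 0" by (cases w) auto
    define b where "b = (i-1) div w"
    define t where "t = (i-1) mod w"
    have bq: "b < q" using i1 wpos unfolding b_def by (simp add: less_mult_imp_div_less)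
    have tw: "t < w" using wpos unfolding t_def by simp
    have ieq: "i = 1 + (b*w+t)" using False unfolding b_def t_def
      by (metis One_nat_def Suc_pred add.commute div_mult_mod_eq neq0_conv plus_1_eq_Suc)
    have c1: "length (filter (\<lambda>r. g a0 r ! i = Some a) P) = (if a0 = b then length (filter (\<lambda>r. r!t = Some a) P) else 0)" for a0
    proof -
      have "filter (\<lambda>r. g a0 r ! i = Some a) P = filter (\<lambda>r. (if b = a0 then r!t else None) = Some a) P"
        using gi[OF _ bq tw] ieq by (intro filter_cong) auto
      then show ?thesis by (simp add: filter_empty_conv)
    qed
    have "length (filter (\<lambda>r. r!i = Some a) (fractal q (Suc m))) = length (filter (\<lambda>r. r!t = Some a) P)"
      unfolding cnt c1 using bq by simp
    also have "\<dots> \<le> 1 + card {j. j < w \<and> j \<noteq> t \<and> (\<forall>r\<in>set P. r!j \<noteq> None \<longrightarrow> r!t \<noteq> None \<and> r!t \<noteq> Some a)}"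
      using Suc.IH[of t a] tw unfolding P_def w_def by simp
    also have "card {j. j < w \<and> j \<noteq> t \<and> (\<forall>r\<in>set P. r!j \<noteq> None \<longrightarrow> r!t \<noteq> None \<and> r!t \<noteq> Some a)} \<le> card D"
      (is "card ?DP \<le> _")
    proof -
      have "card ?DP = card ((\<lambda>t'. 1 + (b*w+t')) ` ?DP)"
        by (rule card_image[symmetric]) (auto simp: inj_on_def)
      also have "\<dots> \<le> card D"
      proof (rule card_mono[OF finD], rule subsetI)
        fix j assume "j \<in> (\<lambda>t'. 1 + (b*w+t')) ` ?DP"
        then obtain t' where t': "t' < w" "t' \<noteq> t" "j = 1 + (b*w+t')"
          "\<forall>r\<in>set P. r!t' \<noteq> None \<longrightarrow> r!t \<noteq> None \<and> r!t \<noteq> Some a" by auto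
        have jl: "j < 1 + q*w"
        proof -
          have "b*w + t' < b*w + w" using t' by simp
          also have "\<dots> = (b+1)*w" by simp
          also have "\<dots> \<le> q*w" using bq by (intro mult_right_mono) auto
          finally show ?thesis using t' by simp
        qed
        show "j \<in> D" unfolding D_def nc
        proof (intro CollectI conjI ballI impI)
          show "j < 1 + q*w" by fact
          show "j \<noteq> i" using ieq t' by simp
        next
          fix r' assume r': "r' \<in> set (fractal q (Suc m))" "r' ! j \<noteq> None"
          then obtain a0 r where a0: "a0 < q" "r \<in> set P" "r' = g a0 r" using rows by auto
          then have ba: "b = a0" and "r ! t' \<noteq> None" using r' gi[OF _ bq t'(1)] t'(3) by (auto split: if_splits)
          then have "r!t \<noteq> None \<and> r!t \<noteq> Some a" using t'(4) a0 by auto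
          moreover have "r' ! i = r ! t" using a0 ba gi[OF _ bq tw] ieq by simp
          ultimately show "r' ! i \<noteq> None" "r' ! i \<noteq> Some a" by auto
        qed
      qed
      finally show ?thesis .
    qed
    finally show ?thesis unfolding D_def by simp
  qed
qed

lemma listcomp_eq: "[f r. r \<leftarrow> xs, P r] = map f (filter P xs)"
  by (induction xs) auto

lemma del_col_nth:
  assumes "length r = n" "i < n" "c < n - 1"
  shows "del_col i r ! c = r ! (if c < i then c else Suc c)"
  using assms unfolding del_col_def by (auto simp: nth_append min_def)

lemma length_del_col: "length r = n \<Longrightarrow> i < n \<Longrightarrow> length (del_col i r) = n - 1"
  unfolding del_col_def by simp

lemma ncols_bang_le:
  "ncols (bang q F i a) \<le> card {c. c < bang_raw_width F i a \<and> (\<exists>r\<in>set (bang_raw q F i a). r!c \<noteq> None)}"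
proof -
  define R where "R = bang_raw q F i a"
  define keep where "keep = filter (\<lambda>c. \<exists>r\<in>set R. r ! c \<noteq> None) [0..<bang_raw_width F i a]"
  have b: "bang q F i a = map (\<lambda>r. map (\<lambda>c. r ! c) keep) R"
    unfolding bang_def R_def keep_def by (simp add: Let_def)
  have "ncols (bang q F i a) \<le> length keep"
    unfolding b ncols_def by (cases R) auto
  also have "length keep = card (set keep)"
    by (simp add: keep_def distinct_card[symmetric])
  also have "set keep = {c. c < bang_raw_width F i a \<and> (\<exists>r\<in>set R. r!c \<noteq> None)}"
    unfolding keep_def by auto
  finally show ?thesis unfolding R_def .
qed

lemma bang_bound:
  assumes len: "\<forall>r\<in>set F. length r = n" and i: "i < n" and nc: "ncols F = n"
  shows "ncols (bang q F i a) + card {j. j < n \<and> j \<noteq> i \<and> (\<forall>r\<in>set F. r!j \<noteq> None \<longrightarrow> r!i \<noteq> None \<and> r!i \<noteq> Some a)}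
     \<le> n - 1 + length (filter (\<lambda>r. r!i = Some a) F)"
proof -
  define k where "k = length (filter (\<lambda>r. r!i = Some a) F)"
  define h where "h = (\<lambda>c::nat. if c < i then c else Suc c)"
  define Live where "Live = {j. j < n \<and> j \<noteq> i \<and> (\<exists>r\<in>set F. (r!i = None \<or> r!i = Some a) \<and> r!j \<noteq> None)}"
  define Dead where "Dead = {j. j < n \<and> j \<noteq> i \<and> (\<forall>r\<in>set F. r!j \<noteq> None \<longrightarrow> r!i \<noteq> None \<and> r!i \<noteq> Some a)}"
  define D1 where "D1 = {c. c < n - 1 \<and> h c \<in> Live}"
  define C where "C = {c. c < bang_raw_width F i a \<and> (\<exists>r\<in>set (bang_raw q F i a). r!c \<noteq> None)}"
  have W: "bang_raw_width F i a = n - 1 + k" unfolding bang_raw_width_def nc k_def by simp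
  have CD: "C \<subseteq> D1 \<union> {n-1..<n-1+k}"
  proof
    fix c assume "c \<in> C"
    then obtain r where c: "c < n - 1 + k" "r \<in> set (bang_raw q F i a)" "r!c \<noteq> None"
      unfolding C_def W by auto
    show "c \<in> D1 \<union> {n-1..<n-1+k}"
    proof (cases "c < n - 1")
      case False then show ?thesis using c by auto
    next
      case True
      have "\<exists>r0\<in>set F. (r0!i = None \<or> r0!i = Some a) \<and> r!c = del_col i r0 ! c"
      proof -
        define G where "G = [del_col i r. r \<leftarrow> F, r ! i = Some a]"
        have lG: "length G = k" unfolding G_def k_def listcomp_eq by simp
        have "(\<exists>r0\<in>set F. r0!i = None \<and> r = del_col i r0 @ replicate k None) \<or>
              (\<exists>j<k. \<exists>b. r = (G ! j) @ (replicate k None)[j := Some b])"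
          using c(2) unfolding bang_raw_def Let_def G_def[symmetric] lG by auto
        then show ?thesis
        proof
          assume "\<exists>r0\<in>set F. r0!i = None \<and> r = del_col i r0 @ replicate k None"
          then obtain r0 where r0: "r0 \<in> set F" "r0!i = None" "r = del_col i r0 @ replicate k None" by blast
          have "length (del_col i r0) = n - 1" using len r0 i length_del_col by blast
          then show ?thesis using r0 True by (auto simp: nth_append)
        next
          assume "\<exists>j<k. \<exists>b. r = (G ! j) @ (replicate k None)[j := Some b]"
          then obtain j b where jb: "j < k" "r = (G ! j) @ (replicate k None)[j := Some b]" by blast
          have "G ! j \<in> set G" using jb lG by simp
          then obtain r0 where r0: "r0 \<in> set F" "r0!i = Some a" "G!j = del_col i r0" unfolding G_def listcomp_eq by auto
          have "length (del_col i r0) = n - 1" using len r0 i length_del_col by blast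
          then show ?thesis using r0 True jb by (auto simp: nth_append)
        qed
      qed
      then obtain r0 where r0: "r0 \<in> set F" "r0!i = None \<or> r0!i = Some a" "r!c = del_col i r0 ! c" by blast
      have "del_col i r0 ! c = r0 ! h c" using del_col_nth[of r0 n i c] len r0 i True unfolding h_def by simp
      moreover have "h c < n" "h c \<noteq> i" using True i unfolding h_def by auto
      ultimately have "h c \<in> Live" unfolding Live_def using r0 c by auto
      then show ?thesis using True unfolding D1_def by auto
    qed
  qed
  have "card C \<le> card (D1 \<union> {n-1..<n-1+k})"
    by (rule card_mono[OF _ CD]) (simp add: D1_def)
  also have "\<dots> \<le> card D1 + card {n-1..<n-1+k}" by (rule card_Un_le)
  also have "card D1 \<le> card Live"
  proof -
    have "card D1 = card (h ` D1)" by (rule card_image[symmetric]) (auto simp: inj_on_def h_def split: if_splits)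
    also have "\<dots> \<le> card Live" by (rule card_mono) (auto simp: Live_def D1_def)
    finally show ?thesis .
  qed
  finally have 1: "card C \<le> card Live + k" by simp
  have "Live \<union> Dead = {..<n} - {i}" "Live \<inter> Dead = {}" unfolding Live_def Dead_def by auto
  then have "card Live + card Dead = n - 1"
    by (metis card_Diff_singleton card_Un_disjoint card_lessThan finite_Diff finite_Un finite_lessThan i lessThan_iff)
  then show ?thesis using 1 ncols_bang_le[of q F i a] unfolding C_def Dead_def k_def by linarith
qed

theorem mainTheorem13:
  fixes q m :: nat and F :: smatrix
  assumes "q \<ge> 2" and "m \<ge> 1" and "is_fractal q m F"
  shows "non_expandable q F"
proof -
  have q1: "q \<ge> 1" using assms(1) by simp
  define M where "M = fractal q m"
  define n where "n = ncols M"
  define perm where "perm = (\<lambda>\<sigma> (r::nat option list). map (\<lambda>j. r ! \<sigma> j) [0..<n])"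
  obtain \<sigma> where \<sigma>: "\<sigma> permutes {..<n}" "mset F = mset (map (perm \<sigma>) M)"
    using assms(3) unfolding is_fractal_def Let_def M_def n_def perm_def by blast
  have FM: "M \<noteq> []" "\<forall>r\<in>set M. length r = n"
    using frac_props[OF q1, of m] unfolding M_def n_def by auto
  have setF: "set F = perm \<sigma> ` set M" using mset_eq_setD[OF \<sigma>(2)] by simp
  have lenF: "\<forall>r\<in>set F. length r = n" unfolding setF perm_def by auto
  have "length F = length M" using arg_cong[OF \<sigma>(2), of size] by simp
  then have "F \<noteq> []" using FM by auto
  then have ncF: "ncols F = n" using lenF unfolding ncols_def by (cases F) auto
  have pnth: "perm \<sigma> r ! j = r ! \<sigma> j" if "j < n" for r j
    using that unfolding perm_def by simp
  show ?thesis unfolding non_expandable_def ncF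
  proof (intro allI impI)
    fix i a assume i: "i < n" and a: "a < q"
    have si: "\<sigma> i < n" using permutes_in_image[OF \<sigma>(1)] i by simp
    define DeadF where "DeadF = {j. j < n \<and> j \<noteq> i \<and> (\<forall>r\<in>set F. r!j \<noteq> None \<longrightarrow> r!i \<noteq> None \<and> r!i \<noteq> Some a)}"
    define DeadM where "DeadM = {j. j < n \<and> j \<noteq> \<sigma> i \<and> (\<forall>r\<in>set M. r!j \<noteq> None \<longrightarrow> r!(\<sigma> i) \<noteq> None \<and> r!(\<sigma> i) \<noteq> Some a)}"
    have B: "ncols (bang q F i a) + card DeadF \<le> n - 1 + length (filter (\<lambda>r. r!i = Some a) F)"
      unfolding DeadF_def by (rule bang_bound[OF lenF i ncF])
    have "length (filter (\<lambda>r. r!i = Some a) F) = size (filter_mset (\<lambda>r. r!i = Some a) (mset F))"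
      by (simp flip: mset_filter)
    also have "\<dots> = length (filter (\<lambda>r. r!i = Some a) (map (perm \<sigma>) M))"
      by (metis \<sigma>(2) mset_filter size_mset)
    also have "\<dots> = length (filter (\<lambda>r. r!(\<sigma> i) = Some a) M)"
      by (simp add: filter_map comp_def pnth[OF i])
    also have "\<dots> \<le> 1 + card DeadM"
      using key[OF q1 si[unfolded n_def M_def]] unfolding DeadM_def n_def M_def by simp
    also have "card DeadM \<le> card DeadF"
    proof -
      have "DeadM \<subseteq> \<sigma> ` DeadF"
      proof
        fix j' assume j': "j' \<in> DeadM"
        define j where "j = inv \<sigma> j'"
        have sj: "\<sigma> j = j'" unfolding j_def using permutes_inverses(1)[OF \<sigma>(1)] by simp
        have jn: "j < n" using permutes_in_image[OF \<sigma>(1), of j] sj j' unfolding DeadM_def by simp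
        have "j \<in> DeadF" unfolding DeadF_def setF
        proof (intro CollectI conjI ballI impI)
          show "j < n" by fact
          show "j \<noteq> i" using sj j' unfolding DeadM_def by auto
        next
          fix r assume "r \<in> perm \<sigma> ` set M" "r ! j \<noteq> None"
          then obtain r0 where "r0 \<in> set M" "r = perm \<sigma> r0" "r0 ! j' \<noteq> None"
            using pnth[OF jn] sj by auto
          then show "r!i \<noteq> None" "r!i \<noteq> Some a" using j' pnth[OF i] unfolding DeadM_def by auto
        qed
        then show "j' \<in> \<sigma> ` DeadF" using sj by blast
      qed
      then have "card DeadM \<le> card (\<sigma> ` DeadF)" by (rule card_mono[rotated]) (simp add: DeadF_def)
      also have "\<dots> \<le> card DeadF" by (rule card_image_le) (simp add: DeadF_def)
      finally show ?thesis .
    qed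
    finally show "ncols (bang q F i a) \<le> n" using B i by linarith
  qed
qed

end
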